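(* Call a finite union-closed collection of sets containing at least one non-empty set a counterexample if every element of its universe belongs to fewer than half of the sets of the collection. Let $\mathcal{A}$ be a separating, union-closed counterexample such that no counterexample has fewer sets than $\mathcal{A}$. Then $|\mathcal{A}|\ge 4m-1$, where $m=|U(\mathcal{A})|$.
   Context: A collection $\mathcal{A}$ of sets is union-closed if $S,T\in\mathcal{A}$ implies $S\cup T\in\mathcal{A}$. The universe $U(\mathcal{A})$ is $\bigcup_{A\in\mathcal{A}}A$. $\mathcal{A}$ is separating if for any two distinct elements of $U(\mathcal{A})$ there is a set in $\mathcal{A}$ containing one of them but not the other. *)

theory Defs
  imports Main
begin

definition union_closed :: "'a set set \<Rightarrow> bool" where
  "union_closed \<A> \<longleftrightarrow> (\<forall>S\<in>\<A>. \<forall>T\<in>\<A>. S \<union> T \<in> \<A>)"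

definition universe :: "'a set set \<Rightarrow> 'a set" where
  "universe \<A> = \<Union>\<A>"

definition separating :: "'a set set \<Rightarrow> bool" where
  "separating \<A> \<longleftrightarrow>
     (\<forall>x\<in>universe \<A>. \<forall>y\<in>universe \<A>. x \<noteq> y \<longrightarrow>
        (\<exists>S\<in>\<A>. (x \<in> S \<and> y \<notin> S) \<or> (y \<in> S \<and> x \<notin> S)))"

definition counterexample :: "'a set set \<Rightarrow> bool" where
  "counterexample \<A> \<longleftrightarrow>
     finite \<A> \<and> union_closed \<A> \<and> (\<exists>S\<in>\<A>. S \<noteq> {}) \<and>
     (\<forall>x\<in>universe \<A>. 2 * card {S\<in>\<A>. x \<in> S} < card \<A>)"

end

theory Submission
  imports Defs
begin

lemma uc_Union:
  assumes "union_closed A" "finite B" "B \<noteq> {}" "B \<subseteq> A"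
  shows "\<Union>B \<in> A"
  using assms(2,3,4)
proof (induction B rule: finite_ne_induct)
  case (singleton x) then show ?case by simp
next
  case (insert x F)
  then have "\<Union>F \<in> A" "x \<in> A" by auto
  then have "x \<union> \<Union>F \<in> A" using assms(1) unfolding union_closed_def by blast
  then show ?case by simp
qed

lemma finite_max_obtain:
  fixes f :: "'b \<Rightarrow> nat"
  assumes "finite X" "X \<noteq> {}"
  obtains x where "x \<in> X" "\<forall>z\<in>X. f z \<le> f x"
proof -
  have "Max (f ` X) \<in> f ` X" using assms by (intro Max_in) auto
  then obtain x where "x\<in>X" "f x = Max (f ` X)" by auto
  moreover have "\<forall>z\<in>X. f z \<le> Max (f ` X)" using assms by (auto intro: Max_ge)
  ultimately show ?thesis using that by auto
qed

lemma sep_max: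
  assumes "separating A" "finite A" "x \<in> universe A" "z \<in> universe A" "z \<noteq> x"
    "{S\<in>A. x\<in>S} \<subseteq> {S\<in>A. z\<in>S}" "card {S\<in>A. z\<in>S} \<le> card {S\<in>A. x\<in>S}"
  shows False
proof -
  have "card {S\<in>A. x\<in>S} \<le> card {S\<in>A. z\<in>S}" using assms(2,6) by (intro card_mono) auto
  then have "{S\<in>A. x\<in>S} = {S\<in>A. z\<in>S}" using assms(2,6,7) by (intro card_subset_eq) auto
  then have e: "\<forall>S\<in>A. x\<in>S \<longleftrightarrow> z\<in>S" by blast
  obtain S where "S \<in> A" "(x \<in> S \<and> z \<notin> S) \<or> (z \<in> S \<and> x \<notin> S)"
    using assms(1,3,4,5) unfolding separating_def by blast
  then show False using e by blast
qed

lemma card_split: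
  assumes "finite A"
  shows "card {S\<in>A. P S} = card {S\<in>A. P S \<and> Q S} + card {S\<in>A. P S \<and> \<not> Q S}"
proof -
  have "{S\<in>A. P S} = {S\<in>A. P S \<and> Q S} \<union> {S\<in>A. P S \<and> \<not> Q S}" by auto
  moreover have "card ({S\<in>A. P S \<and> Q S} \<union> {S\<in>A. P S \<and> \<not> Q S})
      = card {S\<in>A. P S \<and> Q S} + card {S\<in>A. P S \<and> \<not> Q S}"
    using assms by (intro card_Un_disjoint) auto
  ultimately show ?thesis by simp
qed

lemma card_split0:
  assumes "finite A"
  shows "card A = card {S\<in>A. Q S} + card {S\<in>A. \<not> Q S}"
  using card_split[OF assms, of "\<lambda>_. True" Q] by simp

theorem theorem1:
  fixes \<A> :: "'a set set"
  assumes "counterexample \<A>"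
    and "separating \<A>"
    and "\<And>\<B> :: 'a set set. counterexample \<B> \<Longrightarrow> card \<A> \<le> card \<B>"
    and "\<And>\<B> :: nat set set. counterexample \<B> \<Longrightarrow> card \<A> \<le> card \<B>"
  shows "int (card \<A>) \<ge> 4 * int (card (universe \<A>)) - 1"
proof (cases "finite (universe \<A>)")
  case False then show ?thesis by simp
next
  case finU: True
  define U where "U = universe \<A>"
  have fin: "finite \<A>" and uc: "union_closed \<A>" and ne: "\<exists>S\<in>\<A>. S \<noteq> {}"
    and freq: "\<forall>x\<in>U. 2 * card {S\<in>\<A>. x \<in> S} < card \<A>"
    using assms(1) unfolding counterexample_def U_def by auto
  have sep: "separating \<A>" by (rule assms(2))
  have finU': "finite U" using finU U_def by simp
  have Une: "U \<noteq> {}" using ne unfolding U_def universe_def by auto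
  have UA: "U \<in> \<A>" unfolding U_def universe_def using uc fin ne by (intro uc_Union) auto
  define Ax where "Ax z = {S\<in>\<A>. z\<in>S}" for z
  have finAx: "finite (Ax z)" for z unfolding Ax_def using fin by simp
  have Axne: "Ax z \<noteq> {}" if "z \<in> U" for z
    using that unfolding Ax_def U_def universe_def by auto
  have Axpos: "card (Ax z) > 0" if "z \<in> U" for z
    using Axne[OF that] finAx by (simp add: card_gt_0_iff)
  obtain x where xU: "x \<in> U" and xmax: "\<forall>z\<in>U. card (Ax z) \<le> card (Ax x)"
    using finite_max_obtain[OF finU' Une, of "\<lambda>z. card (Ax z)"] by blast
  define B where "B = {S\<in>\<A>. x \<notin> S}"
  have splitx: "card \<A> = card (Ax x) + card B"
    unfolding Ax_def B_def using card_split0[OF fin, of "\<lambda>S. x \<in> S"] by simp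
  have finB: "finite B" unfolding B_def using fin by simp
  have ucB: "union_closed B" using uc unfolding union_closed_def B_def by auto
  have neB: "\<exists>S\<in>B. S \<noteq> {}"
  proof (rule ccontr)
    assume "\<not> ?thesis"
    then have "B \<subseteq> {{}}" by auto
    then have "card B \<le> 1" using card_mono[of "{{}}" B] by simp
    then show False using freq xU splitx Axpos[OF xU] unfolding Ax_def by auto
  qed
  have "\<not> counterexample B"
  proof
    assume "counterexample B"
    then have "card \<A> \<le> card B" by (rule assms(3))
    then show False using splitx Axpos[OF xU] by simp
  qed
  then obtain y where yB: "y \<in> universe B" and yfreq: "\<not> 2 * card {S\<in>B. y\<in>S} < card B"
    using finB ucB neB unfolding counterexample_def by auto
  have eqB: "{S\<in>B. y\<in>S} = {S\<in>\<A>. x \<notin> S \<and> y \<in> S}" unfolding B_def by auto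
  obtain S0 where S0: "S0 \<in> \<A>" "x \<notin> S0" "y \<in> S0" using yB unfolding universe_def B_def by auto
  have yU: "y \<in> U" using S0 unfolding U_def universe_def by auto
  define Y where "Y = {z\<in>U. Ax y \<subseteq> Ax z}"
  have finY: "finite Y" unfolding Y_def using finU' by simp
  have Yne: "Y \<noteq> {}" unfolding Y_def using yU by auto
  obtain y' where y'Y: "y' \<in> Y" and y'max: "\<forall>z\<in>Y. card (Ax z) \<le> card (Ax y')"
    using finite_max_obtain[OF finY Yne, of "\<lambda>z. card (Ax z)"] by blast
  have y'U: "y' \<in> U" and yy': "Ax y \<subseteq> Ax y'" using y'Y unfolding Y_def by auto
  have Uuni: "universe \<A> = U" by (simp add: U_def)
  have maxx: "\<And>z. z \<in> U \<Longrightarrow> z \<noteq> x \<Longrightarrow> Ax x \<subseteq> Ax z \<Longrightarrow> False"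
    using sep_max[OF sep fin] xmax xU unfolding Ax_def Uuni by blast
  have maxy': "\<And>z. z \<in> U \<Longrightarrow> z \<noteq> y' \<Longrightarrow> Ax y' \<subseteq> Ax z \<Longrightarrow> False"
  proof -
    fix z assume z: "z \<in> U" "z \<noteq> y'" "Ax y' \<subseteq> Ax z"
    then have "z \<in> Y" using yy' unfolding Y_def by auto
    then have "card (Ax z) \<le> card (Ax y')" using y'max by auto
    then show False using sep_max[OF sep fin, of y' z] z y'U unfolding Ax_def Uuni by blast
  qed
  have y'x: "y' \<noteq> x"
  proof
    assume "y' = x"
    then have "S0 \<in> Ax x" using yy' S0 unfolding Ax_def by auto
    then show False using S0 unfolding Ax_def by auto
  qed
  define V where "V z = \<Union>{S\<in>\<A>. z \<notin> S}" for z
  have Vin: "V z \<in> \<A>" if "z \<in> U" for z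
  proof -
    have "{S\<in>\<A>. z \<notin> S} \<noteq> {}"
    proof
      assume "{S\<in>\<A>. z \<notin> S} = {}"
      then have "{S\<in>\<A>. z \<in> S} = \<A>" by auto
      then show False using freq that by auto
    qed
    then show ?thesis unfolding V_def using uc fin by (intro uc_Union) auto
  qed
  have Vz: "z \<notin> V z" for z unfolding V_def by auto
  have Vmem: "w \<in> V z" if "z \<in> U" "w \<in> U" "z \<noteq> w" "\<And>z'. z' \<in> U \<Longrightarrow> z' \<noteq> w \<Longrightarrow> Ax w \<subseteq> Ax z' \<Longrightarrow> False" for z w
  proof (rule ccontr)
    assume "w \<notin> V z"
    then have "Ax w \<subseteq> Ax z" unfolding Ax_def V_def by auto
    then show False using that by blast
  qed
  have Vinj: "inj_on V U"
  proof (rule inj_onI)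
    fix z z' assume zz: "z \<in> U" "z' \<in> U" "V z = V z'"
    show "z = z'"
    proof (rule ccontr)
      assume "z \<noteq> z'"
      then obtain S where "S \<in> \<A>" "(z \<in> S \<and> z' \<notin> S) \<or> (z' \<in> S \<and> z \<notin> S)"
        using sep zz unfolding separating_def Uuni by blast
      then show False using zz Vz unfolding V_def by blast
    qed
  qed
  define G where "G = insert U (V ` (U - {x, y'}))"
  have UnotV: "U \<notin> V ` (U - {x, y'})" using Vz by auto
  have cardD: "card (U - {x, y'}) = card U - 2"
    using finU' xU y'U y'x by (subst card_Diff_subset) auto
  have m2: "card U \<ge> 2" using card_mono[OF finU', of "{x,y'}"] xU y'U y'x by auto
  have cardG: "card G = card U - 1"
  proof -
    have "card (V ` (U - {x, y'})) = card U - 2"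
      using cardD card_image[OF inj_on_subset[OF Vinj, of "U - {x,y'}"]] by auto
    then show ?thesis unfolding G_def using UnotV finU' m2 by simp
  qed
  have GA: "G \<subseteq> {S\<in>\<A>. y' \<in> S \<and> x \<in> S}"
  proof
    fix S assume "S \<in> G"
    then consider "S = U" | z where "z \<in> U" "z \<noteq> x" "z \<noteq> y'" "S = V z" unfolding G_def by auto
    then show "S \<in> {S\<in>\<A>. y' \<in> S \<and> x \<in> S}"
    proof cases
      case 1 then show ?thesis using UA xU y'U by auto
    next
      case 2
      have "x \<in> V z" using Vmem[OF 2(1) xU] 2 maxx by blast
      moreover have "y' \<in> V z" using Vmem[OF 2(1) y'U] 2 maxy' by blast
      ultimately show ?thesis using 2 Vin by auto
    qed
  qed
  have g: "card U - 1 \<le> card {S\<in>\<A>. y' \<in> S \<and> x \<in> S}"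
    using cardG card_mono[OF _ GA] fin by simp
  have e: "card {S\<in>\<A>. x \<notin> S \<and> y\<in>S} \<le> card {S\<in>\<A>. y' \<in> S \<and> x \<notin> S}"
    using yy' fin unfolding Ax_def by (intro card_mono) auto
  have f: "card (Ax y') = card {S\<in>\<A>. y' \<in> S \<and> x \<in> S} + card {S\<in>\<A>. y' \<in> S \<and> x \<notin> S}"
    unfolding Ax_def using card_split[OF fin, of "\<lambda>S. y' \<in> S" "\<lambda>S. x \<in> S"] by simp
  have fx: "2 * card (Ax x) < card \<A>" using freq xU unfolding Ax_def by auto
  have fy: "2 * card (Ax y') < card \<A>" using freq y'U unfolding Ax_def by auto
  have yf: "card B \<le> 2 * card {S\<in>\<A>. x \<notin> S \<and> y\<in>S}" using yfreq eqB by simp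
  have "4 * card U \<le> card \<A> + 1" using f fx fy yf e g splitx m2 by linarith
  then have h: "int (4 * card U) \<le> int (card \<A> + 1)" by (simp only: of_nat_le_iff)
  then show ?thesis unfolding U_def by simp
qed

end
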